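(* Let $H$ be a set of $n$ objects with an associated decomposition scheme of combinatorial dimension $b$ that complies with the Clarkson–Shor framework. Assume its local growth function satisfies $u(m)\le 2^\alpha m^\beta$ for some real $\alpha$ and some $\beta\ge1$. Let $r>1$ and $\varphi\in(0,1)$. Let $R$ be a $\rho$-sample from $H$, where $$\rho\ \ge\ \max\Bigl(4r\bigl(b\ln 3+(\alpha-\beta)\ln 2+\ln\tfrac1\varphi\bigr),\ 8r\beta\ln(4r\beta)\Bigr).$$ Then, with probability at least $1-\varphi$, $\mathcal{CD}(R)$ is a $(1/r)$-cutting, i.e., every cell $\sigma\in\mathcal{CD}(R)$ satisfies $|K(\sigma)|\le n/r$.
   Context: Clarkson–Shor framework. $H$ is a finite set of objects embedded in some space $E$. Every subset $I\subseteq H$ determines a set $\mathcal{CD}(I)$ of cells. Combinatorial dimension: there is an integer $b>0$ such that for every $I\subseteq H$ and every $\sigma\in\mathcal{CD}(I)$ there is $J\subseteq I$ with $|J|\le b$ and $\sigma\in\mathcal{CD}(J)$. A smallest such $J$ is a defining set $D(\sigma)$ (any choice may be used). The least such $b$ is the combinatorial dimension. Conflict list: $f\in H$ conflicts with $\sigma$ if $\sigma\notin\mathcal{CD}(D(\sigma)\cup\{f\})$, and $K(\sigma)$ is the set of conflicting objects. Compliance means both axioms hold: (i) for every $R\subseteq H$ and every $\sigma\in\mathcal{CD}(R)$, some defining set $D(\sigma)\subseteq R$, and $K(\sigma)\cap R=\emptyset$; (ii) if $D(\sigma)\subseteq R$ for some defining set and $K(\sigma)\cap R=\emptyset$, then $\sigma\in\mathcal{CD}(R)$.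 Local growth function: $u(m)=\max_{I\subseteq H,|I|=m}|\mathcal{CD}(I)|$. A $\rho$-sample is the set of elements obtained by $\rho$ independent uniform draws from $H$, with repetition. *)

theory Defs
  imports "HOL-Analysis.Analysis" "HOL-Probability.Probability"
begin

definition has_dim_bound :: "'a set \<Rightarrow> ('a set \<Rightarrow> 'c set) \<Rightarrow> nat \<Rightarrow> bool" where
  "has_dim_bound H CD b \<longleftrightarrow>
     (\<forall>I \<subseteq> H. \<forall>\<sigma> \<in> CD I. \<exists>J \<subseteq> I. card J \<le> b \<and> \<sigma> \<in> CD J)"

definition comb_dim :: "'a set \<Rightarrow> ('a set \<Rightarrow> 'c set) \<Rightarrow> nat \<Rightarrow> bool" where
  "comb_dim H CD b \<longleftrightarrow> b > 0 \<and> has_dim_bound H CD b \<and>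
     (\<forall>b'. b' > 0 \<and> has_dim_bound H CD b' \<longrightarrow> b \<le> b')"

definition all_cells :: "'a set \<Rightarrow> ('a set \<Rightarrow> 'c set) \<Rightarrow> 'c set" where
  "all_cells H CD = (\<Union>I \<in> Pow H. CD I)"

definition is_defining_set :: "'a set \<Rightarrow> ('a set \<Rightarrow> 'c set) \<Rightarrow> 'c \<Rightarrow> 'a set \<Rightarrow> bool" where
  "is_defining_set H CD \<sigma> J \<longleftrightarrow> J \<subseteq> H \<and> \<sigma> \<in> CD J \<and>
     (\<forall>J'. J' \<subseteq> H \<and> \<sigma> \<in> CD J' \<longrightarrow> card J \<le> card J')"

definition defining_choice :: "'a set \<Rightarrow> ('a set \<Rightarrow> 'c set) \<Rightarrow> ('c \<Rightarrow> 'a set) \<Rightarrow> bool" where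
  "defining_choice H CD D \<longleftrightarrow> (\<forall>\<sigma> \<in> all_cells H CD. is_defining_set H CD \<sigma> (D \<sigma>))"

definition conflict_list :: "'a set \<Rightarrow> ('a set \<Rightarrow> 'c set) \<Rightarrow> ('c \<Rightarrow> 'a set) \<Rightarrow> 'c \<Rightarrow> 'a set" where
  "conflict_list H CD D \<sigma> = {f \<in> H. \<sigma> \<notin> CD (D \<sigma> \<union> {f})}"

definition complies :: "'a set \<Rightarrow> ('a set \<Rightarrow> 'c set) \<Rightarrow> ('c \<Rightarrow> 'a set) \<Rightarrow> bool" where
  "complies H CD D \<longleftrightarrow>
     (\<forall>R \<subseteq> H. \<forall>\<sigma> \<in> CD R.
        (\<exists>J. is_defining_set H CD \<sigma> J \<and> J \<subseteq> R) \<and> conflict_list H CD D \<sigma> \<inter> R = {}) \<and>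
     (\<forall>R \<subseteq> H. \<forall>\<sigma> \<in> all_cells H CD.
        (\<exists>J. is_defining_set H CD \<sigma> J \<and> J \<subseteq> R) \<and> conflict_list H CD D \<sigma> \<inter> R = {}
          \<longrightarrow> \<sigma> \<in> CD R)"

definition local_growth :: "'a set \<Rightarrow> ('a set \<Rightarrow> 'c set) \<Rightarrow> nat \<Rightarrow> nat" where
  "local_growth H CD m = Max ((\<lambda>I. card (CD I)) ` {I. I \<subseteq> H \<and> card I = m})"

text \<open>A \<rho>-sample: \<rho> independent uniform draws from H (with repetition);
  the outcome \<omega> :: nat => 'a gives the sample set \<omega> ` {..<\<rho>}.\<close>
definition draws :: "'a set \<Rightarrow> nat \<Rightarrow> (nat \<Rightarrow> 'a) pmf" where
  "draws H \<rho> = Pi_pmf {..<\<rho>} undefined (\<lambda>_. pmf_of_set H)"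

definition sample_set :: "nat \<Rightarrow> (nat \<Rightarrow> 'a) \<Rightarrow> 'a set" where
  "sample_set \<rho> \<omega> = \<omega> ` {..<\<rho>}"

end

theory Submission
  imports Defs
begin

lemma sum_pow_subsets:
  fixes x y :: real
  assumes "finite X"
  shows "(\<Sum>A\<in>Pow X. x ^ card A * y ^ card (X - A)) = (x + y) ^ card X"
  using assms
proof (induction X rule: finite_induct)
  case empty
  then show ?case by simp
next
  case (insert a X)
  have fin: "finite (Pow X)" using insert by simp
  have disj: "Pow X \<inter> insert a ` Pow X = {}" using insert by auto
  have inj: "inj_on (insert a) (Pow X)" using insert
    by (auto simp: inj_on_def)
  have "(\<Sum>A\<in>Pow (insert a X). x ^ card A * y ^ card (insert a X - A))
      = (\<Sum>A\<in>Pow X. x ^ card A * y ^ card (insert a X - A))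
        + (\<Sum>A\<in>insert a ` Pow X. x ^ card A * y ^ card (insert a X - A))"
    by (simp add: Pow_insert, rule sum.union_disjoint) (use fin disj in auto)
  also have "(\<Sum>A\<in>Pow X. x ^ card A * y ^ card (insert a X - A))
      = (\<Sum>A\<in>Pow X. y * (x ^ card A * y ^ card (X - A)))"
  proof (rule sum.cong)
    fix A assume "A \<in> Pow X"
    then have "insert a X - A = insert a (X - A)" "a \<notin> X - A" using insert by auto
    then show "x ^ card A * y ^ card (insert a X - A) = y * (x ^ card A * y ^ card (X - A))"
      using insert by simp
  qed simp
  also have "(\<Sum>A\<in>insert a ` Pow X. x ^ card A * y ^ card (insert a X - A))
      = (\<Sum>A\<in>Pow X. x * (x ^ card A * y ^ card (X - A)))"
  proof -
    have "(\<Sum>A\<in>insert a ` Pow X. x ^ card A * y ^ card (insert a X - A))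
       = (\<Sum>A\<in>Pow X. x ^ card (insert a A) * y ^ card (insert a X - insert a A))"
      by (rule sum.reindex_cong[OF inj refl]) simp
    also have "\<dots> = (\<Sum>A\<in>Pow X. x * (x ^ card A * y ^ card (X - A)))"
    proof (rule sum.cong)
      fix A assume A: "A \<in> Pow X"
      then have "insert a X - insert a A = X - A" using insert by auto
      moreover have "card (insert a A) = Suc (card A)" using A insert
        by (meson PowD card_insert_disjoint finite_subset subsetD)
      ultimately show "x ^ card (insert a A) * y ^ card (insert a X - insert a A) = x * (x ^ card A * y ^ card (X - A))"
        by simp
    qed simp
    finally show ?thesis .
  qed
  finally show ?case using insert
    by (simp add: sum_distrib_left[symmetric] distrib_right)
qed

lemma sum_pow_supsets:
  fixes x y :: real
  assumes "finite U" "T \<subseteq> U"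
  shows "(\<Sum>S\<in>{S. T \<subseteq> S \<and> S \<subseteq> U}. x ^ card S * y ^ card (U - S)) = x ^ card T * (x + y) ^ card (U - T)"
proof -
  have finT: "finite T" using assms finite_subset by blast
  have img: "{S. T \<subseteq> S \<and> S \<subseteq> U} = (\<lambda>A. T \<union> A) ` Pow (U - T)"
  proof
    show "{S. T \<subseteq> S \<and> S \<subseteq> U} \<subseteq> (\<lambda>A. T \<union> A) ` Pow (U - T)"
    proof
      fix S assume "S \<in> {S. T \<subseteq> S \<and> S \<subseteq> U}"
      then have "S = T \<union> (S - T)" "S - T \<in> Pow (U - T)" by auto
      then show "S \<in> (\<lambda>A. T \<union> A) ` Pow (U - T)" by blast
    qed
  qed (use assms in auto)
  have inj: "inj_on (\<lambda>A. T \<union> A) (Pow (U - T))"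
    by (auto simp: inj_on_def)
  have "(\<Sum>S\<in>{S. T \<subseteq> S \<and> S \<subseteq> U}. x ^ card S * y ^ card (U - S))
     = (\<Sum>A\<in>Pow (U - T). x ^ card T * (x ^ card A * y ^ card ((U - T) - A)))"
    unfolding img
  proof (subst sum.reindex[OF inj], rule sum.cong)
    fix A assume A: "A \<in> Pow (U - T)"
    have "finite A" using A assms by (meson PowD finite_Diff finite_subset)
    then have "card (T \<union> A) = card T + card A" using A finT
      by (subst card_Un_disjoint) auto
    moreover have "U - (T \<union> A) = (U - T) - A" by auto
    ultimately show "((\<lambda>S. x ^ card S * y ^ card (U - S)) \<circ> (\<union>) T) A = x ^ card T * (x ^ card A * y ^ card (U - T - A))"
      by (simp add: power_add)
  qed simp
  also have "\<dots> = x ^ card T * (x + y) ^ card (U - T)"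
    by (simp add: sum_distrib_left[symmetric] sum_pow_subsets assms)
  finally show ?thesis .
qed

lemma stepA:
  fixes H :: "'a set" and U S :: "nat set" and G :: "(nat \<Rightarrow> 'a) \<Rightarrow> 'c set" and K :: "'c \<Rightarrow> 'a set"
  assumes finU: "finite U" and SU: "S \<subseteq> U" and finH: "finite H" and neH: "H \<noteq> {}"
    and Gdep: "\<And>f g. (\<forall>i\<in>S. f i = g i) \<Longrightarrow> G f = G g"
    and Gcard: "\<And>f. (\<forall>i\<in>S. f i \<in> H) \<Longrightarrow> finite (G f) \<and> real (card (G f)) \<le> M"
    and Kb: "\<And>f \<sigma>. (\<forall>i\<in>S. f i \<in> H) \<Longrightarrow> \<sigma> \<in> G f \<Longrightarrow> real (card (H - K \<sigma>)) \<le> q * real (card H)"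
    and q: "q \<ge> 0" and M: "M \<ge> 0"
  shows "measure_pmf.prob (Pi_pmf U d (\<lambda>_. pmf_of_set H)) {\<omega>. \<exists>\<sigma>\<in>G \<omega>. \<forall>i\<in>U - S. \<omega> i \<notin> K \<sigma>}
         \<le> M * q ^ card (U - S)"
proof -
  define T where "T = U - S"
  define p where "p = (\<lambda>_::nat. pmf_of_set H)"
  define E where "E = {\<omega>. \<exists>\<sigma>\<in>G \<omega>. \<forall>i\<in>T. \<omega> i \<notin> K \<sigma>}"
  define h where "h = (\<lambda>(f::nat\<Rightarrow>'a,g::nat\<Rightarrow>'a) x. if x \<in> S then f x else g x)"
  have finS: "finite S" using finU SU finite_subset by blast
  have finT: "finite T" using finU T_def by simp
  have UST: "U = S \<union> T" "S \<inter> T = {}" using SU T_def by auto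
  have split: "Pi_pmf U d p = map_pmf h (pair_pmf (Pi_pmf S d p) (Pi_pmf T d p))"
    unfolding UST(1) h_def by (rule Pi_pmf_union[OF finS finT UST(2)])
  have key: "measure_pmf.prob (Pi_pmf T d p) (Pair f -` (h -` E)) \<le> M * q ^ card T"
    if f: "f \<in> set_pmf (Pi_pmf S d p)" for f
  proof -
    have fH: "\<forall>i\<in>S. f i \<in> H"
      using set_Pi_pmf_subset'[OF finS, of d p] f finH neH
      by (auto simp: PiE_dflt_def p_def)
    have Gf: "G (\<lambda>x. if x \<in> S then f x else g x) = G f" for g by (rule Gdep) auto
    have "Pair f -` (h -` E) = {g. \<exists>\<sigma>\<in>G f. \<forall>i\<in>T. g i \<notin> K \<sigma>}"
      using UST by (auto simp: E_def Gf h_def disjoint_iff)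
    also have "\<dots> = (\<Union>\<sigma>\<in>G f. Pi T (\<lambda>_. - K \<sigma>))" by (auto simp: Pi_def)
    finally have eq: "Pair f -` (h -` E) = (\<Union>\<sigma>\<in>G f. Pi T (\<lambda>_. - K \<sigma>))" .
    have finG: "finite (G f)" and cG: "real (card (G f)) \<le> M" using Gcard[OF fH] by auto
    have "measure_pmf.prob (Pi_pmf T d p) (Pair f -` (h -` E))
        \<le> (\<Sum>\<sigma>\<in>G f. measure_pmf.prob (Pi_pmf T d p) (Pi T (\<lambda>_. - K \<sigma>)))"
      unfolding eq by (rule measure_pmf.finite_measure_subadditive_finite[OF finG]) auto
    also have "\<dots> \<le> (\<Sum>\<sigma>\<in>G f. q ^ card T)"
    proof (rule sum_mono)
      fix \<sigma> assume s: "\<sigma> \<in> G f"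
      have "measure_pmf.prob (Pi_pmf T d p) (Pi T (\<lambda>_. - K \<sigma>))
          = (\<Prod>x\<in>T. measure_pmf.prob (pmf_of_set H) (- K \<sigma>))"
        unfolding p_def by (rule measure_Pi_pmf_Pi[OF finT])
      also have "\<dots> = (real (card (H - K \<sigma>)) / real (card H)) ^ card T"
        using finH neH by (simp add: measure_pmf_of_set Diff_eq)
      also have "\<dots> \<le> q ^ card T"
      proof (rule power_mono)
        have "card H > 0" using finH neH by (simp add: card_gt_0_iff)
        then show "real (card (H - K \<sigma>)) / real (card H) \<le> q"
          using Kb[OF fH s] by (simp add: divide_le_eq)
      qed simp
      finally show "measure_pmf.prob (Pi_pmf T d p) (Pi T (\<lambda>_. - K \<sigma>)) \<le> q ^ card T" .
    qed
    also have "\<dots> = real (card (G f)) * q ^ card T" by simp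
    also have "\<dots> \<le> M * q ^ card T"
      by (rule mult_right_mono[OF cG]) (simp add: q)
    finally show ?thesis .
  qed
  have pp: "pair_pmf (Pi_pmf S d p) (Pi_pmf T d p) = bind_pmf (Pi_pmf S d p) (\<lambda>f. map_pmf (Pair f) (Pi_pmf T d p))"
    by (simp add: pair_pmf_def map_pmf_def)
  have "emeasure (measure_pmf (Pi_pmf U d p)) E
       = (\<integral>\<^sup>+f. emeasure (measure_pmf (Pi_pmf T d p)) (Pair f -` (h -` E)) \<partial>measure_pmf (Pi_pmf S d p))"
    by (simp add: split pp)
  also have "\<dots> \<le> (\<integral>\<^sup>+f. ennreal (M * q ^ card T) \<partial>measure_pmf (Pi_pmf S d p))"
    by (rule nn_integral_mono_AE, rule AE_pmfI)
       (simp add: measure_pmf.emeasure_eq_measure key ennreal_leI)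
  also have "\<dots> = ennreal (M * q ^ card T)"
    by (simp add: measure_pmf.emeasure_space_1)
  finally have "ennreal (measure_pmf.prob (Pi_pmf U d p) E) \<le> ennreal (M * q ^ card T)"
    by (simp add: measure_pmf.emeasure_eq_measure)
  then have "measure_pmf.prob (Pi_pmf U d p) E \<le> M * q ^ card T"
    using M q by (simp add: ennreal_le_iff)
  then show ?thesis by (simp add: E_def T_def p_def)
qed

lemma stepB:
  fixes P :: "'b pmf" and U :: "nat set" and Bad :: "'b set" and E :: "nat set \<Rightarrow> 'b set" and x :: real
  assumes finP: "finite (set_pmf P)" and finU: "finite U" and x: "0 \<le> x" "x \<le> 1"
    and pt: "\<And>\<omega>. \<omega> \<in> set_pmf P \<Longrightarrow> \<omega> \<in> Bad \<Longrightarrow>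
               \<exists>T\<subseteq>U. card T \<le> b \<and> (\<forall>S. T \<subseteq> S \<and> S \<subseteq> U \<longrightarrow> \<omega> \<in> E S)"
  shows "x ^ b * measure_pmf.prob P Bad
         \<le> (\<Sum>S\<in>Pow U. x ^ card S * (1 - x) ^ card (U - S) * measure_pmf.prob P (E S))"
proof -
  define w where "w S = x ^ card S * (1 - x) ^ card (U - S)" for S
  have wnn: "w S \<ge> 0" for S using x by (simp add: w_def)
  have int: "integrable (measure_pmf P) f" for f :: "'b \<Rightarrow> real"
    by (rule integrable_measure_pmf_finite[OF finP])
  have "x ^ b * measure_pmf.prob P Bad = (\<integral>\<omega>. x ^ b * indicator Bad \<omega> \<partial>measure_pmf P)"
    by simp
  also have "\<dots> \<le> (\<integral>\<omega>. (\<Sum>S\<in>Pow U. w S * indicator (E S) \<omega>) \<partial>measure_pmf P)"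
  proof (rule integral_mono_AE[OF int int], rule AE_pmfI)
    fix \<omega> assume om: "\<omega> \<in> set_pmf P"
    show "x ^ b * indicator Bad \<omega> \<le> (\<Sum>S\<in>Pow U. w S * indicator (E S) \<omega>)"
    proof (cases "\<omega> \<in> Bad")
      case False
      then show ?thesis using wnn by (simp add: sum_nonneg)
    next
      case True
      obtain T where T: "T \<subseteq> U" "card T \<le> b" "\<And>S. T \<subseteq> S \<Longrightarrow> S \<subseteq> U \<Longrightarrow> \<omega> \<in> E S"
        using pt[OF om True] by blast
      have "x ^ b \<le> x ^ card T" by (rule power_decreasing[OF T(2) x])
      also have "\<dots> = x ^ card T * (x + (1 - x)) ^ card (U - T)" by simp
      also have "\<dots> = (\<Sum>S\<in>{S. T \<subseteq> S \<and> S \<subseteq> U}. w S)"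
        unfolding w_def by (rule sum_pow_supsets[OF finU T(1), symmetric])
      also have "\<dots> = (\<Sum>S\<in>{S. T \<subseteq> S \<and> S \<subseteq> U}. w S * indicator (E S) \<omega>)"
        by (rule sum.cong) (auto simp: T(3))
      also have "\<dots> \<le> (\<Sum>S\<in>Pow U. w S * indicator (E S) \<omega>)"
        by (rule sum_mono2) (use finU wnn in auto)
      finally show ?thesis using True by simp
    qed
  qed
  also have "\<dots> = (\<Sum>S\<in>Pow U. w S * measure_pmf.prob P (E S))"
  proof -
    have "(\<integral>\<omega>. (\<Sum>S\<in>Pow U. w S * indicator (E S) \<omega>) \<partial>measure_pmf P)
        = (\<Sum>S\<in>Pow U. (\<integral>\<omega>. w S * indicator (E S) \<omega> \<partial>measure_pmf P))"
      by (rule Bochner_Integration.integral_sum[where f="\<lambda>S \<omega>. w S * indicator (E S) \<omega>"]) (rule int)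
    then show ?thesis by simp
  qed
  finally show ?thesis by (simp add: w_def)
qed

lemma ln_bound8: "t > 0 \<Longrightarrow> ln (t::real) \<le> 13/12 + t / 8"
proof -
  assume t: "t > 0"
  have "ln t = ln 8 + ln (t / 8)" using t by (simp add: ln_div)
  also have "ln (8::real) = 3 * ln 2"
    using ln_realpow[of 2 3] by simp
  also have "ln (t / 8) \<le> t / 8 - 1" using t by (intro ln_le_minus_one) simp
  finally show ?thesis using ln2_le_25_over_36 by linarith
qed

lemma key_ineq:
  fixes c \<rho> :: real
  assumes c: "c > 1" and rho: "\<rho> \<ge> 8 * c * ln (4 * c)"
  shows "12 * c * ln (2 * \<rho>) \<le> 5 * \<rho>"
proof -
  have l4c: "ln (4 * c) = ln 2 + ln (2 * c)" using c ln_mult[of 2 "2*c"] by simp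
  have l2c: "ln (2 * c) \<ge> 0" using c by simp
  have l2c': "ln (2 * c) \<ge> ln 2" using c by simp
  have ln2: "ln (2::real) \<ge> 2/3" by (rule ln2_ge_two_thirds)
  define t where "t = \<rho> / c"
  have rt: "\<rho> = c * t" using c by (simp add: t_def)
  have tge: "t \<ge> 8 * ln (4 * c)" using rho c by (simp add: t_def field_simps)
  have tpos: "t > 0" using tge l4c l2c ln2 by linarith
  have "ln (2 * \<rho>) = ln (2 * c) + ln t" unfolding rt using c tpos
    by (simp add: ln_mult)
  moreover have "ln t \<le> 13/12 + t / 8" by (rule ln_bound8[OF tpos])
  moreover have "ln (2 * c) \<le> t / 8" using tge l4c ln2 by linarith
  moreover have "t \<ge> 32/3" using tge l4c l2c' ln2 by linarith
  ultimately have "12 * ln (2 * \<rho>) \<le> 5 * t" by linarith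
  then have "c * (12 * ln (2 * \<rho>)) \<le> c * (5 * t)" using c by simp
  then show ?thesis unfolding rt by (simp add: algebra_simps)
qed

lemma final_arith:
  fixes b \<rho> :: nat and \<alpha> \<beta> r \<phi> :: real
  assumes beta: "\<beta> \<ge> 1" and r: "r > 1" and phi: "0 < \<phi>"
    and rho: "real \<rho> \<ge> max (4 * r * (real b * ln 3 + (\<alpha> - \<beta>) * ln 2 + ln (1 / \<phi>)))
                             (8 * r * \<beta> * ln (4 * r * \<beta>))"
  shows "3 ^ b * (2 powr \<alpha> * real \<rho> powr \<beta>) * (1 - 2 / (3 * r)) ^ \<rho> \<le> \<phi>"
proof -
  have c1: "r * \<beta> > 1" proof -
    have "r * 1 \<le> r * \<beta>" using beta r by (intro mult_left_mono) auto
    then show ?thesis using r by linarith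
  qed
  have H1: "4 * r * (real b * ln 3 + (\<alpha> - \<beta>) * ln 2 - ln \<phi>) \<le> real \<rho>"
    using rho phi by (simp add: ln_div)
  have H2: "8 * (r * \<beta>) * ln (4 * (r * \<beta>)) \<le> real \<rho>" using rho by (simp add: mult.assoc)
  have K: "12 * (r * \<beta>) * ln (2 * real \<rho>) \<le> 5 * real \<rho>"
    by (rule key_ineq[OF c1 H2])
  have rpos: "real \<rho> > 0"
  proof -
    have "ln (4 * (r * \<beta>)) > 0" using c1 by simp
    then have "8 * (r * \<beta>) * ln (4 * (r * \<beta>)) > 0" using c1 by simp
    then show ?thesis using H2 by linarith
  qed
  define q where "q = 1 - 2 / (3 * r)"
  have qpos: "q > 0" using r by (simp add: q_def field_simps)
  have lq: "ln q \<le> - 2 / (3 * r)" using ln_le_minus_one[OF qpos] by (simp add: q_def)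
  have e1: "(3::real) ^ b = exp (real b * ln 3)" by (simp add: exp_of_nat_mult)
  have e2: "(2::real) powr \<alpha> = exp (\<alpha> * ln 2)" by (simp add: powr_def mult.commute)
  have e3: "real \<rho> powr \<beta> = exp (\<beta> * ln (real \<rho>))" using rpos by (simp add: powr_def mult.commute)
  have e4: "q ^ \<rho> = exp (real \<rho> * ln q)" using qpos by (simp add: exp_of_nat_mult)
  have lnrho: "ln (2 * real \<rho>) = ln 2 + ln (real \<rho>)" using rpos by (simp add: ln_mult)
  have "\<beta> * ln (2 * real \<rho>) \<le> 5 * real \<rho> / (12 * r)"
    using K r by (simp add: field_simps)
  have sum: "real b * ln 3 + \<alpha> * ln 2 + \<beta> * ln (real \<rho>) + real \<rho> * ln q \<le> ln \<phi>"
  proof -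
    have a: "real \<rho> * ln q \<le> real \<rho> * (- 2 / (3 * r))"
      using mult_left_mono[OF lq, of "real \<rho>"] by simp
    have b1: "real b * ln 3 + (\<alpha> - \<beta>) * ln 2 - ln \<phi> \<le> real \<rho> / (4 * r)"
      using H1 r by (simp add: field_simps)
    have b2: "\<beta> * ln 2 + \<beta> * ln (real \<rho>) \<le> 5 * real \<rho> / (12 * r)"
      using \<open>\<beta> * ln (2 * real \<rho>) \<le> 5 * real \<rho> / (12 * r)\<close> lnrho by (simp add: algebra_simps)
    have b3: "real \<rho> / (4 * r) + 5 * real \<rho> / (12 * r) = real \<rho> * (2 / (3 * r))"
      using r by (simp add: field_simps)
    show ?thesis using a b1 b2 b3 by (simp add: algebra_simps)
  qed
  have "3 ^ b * (2 powr \<alpha> * real \<rho> powr \<beta>) * q ^ \<rho>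
      = exp (real b * ln 3 + \<alpha> * ln 2 + \<beta> * ln (real \<rho>) + real \<rho> * ln q)"
    by (simp add: e1 e2 e3 e4 exp_add)
  also have "\<dots> \<le> exp (ln \<phi>)" using sum by simp
  also have "\<dots> = \<phi>" using phi by simp
  finally show ?thesis by (simp add: q_def)
qed

lemma card_CD_le_growth:
  assumes "finite H" "I \<subseteq> H"
  shows "card (CD I) \<le> local_growth H CD (card I)"
proof -
  have "finite {I. I \<subseteq> H \<and> card I = card I}" using assms(1) by simp
  then have fin: "finite ((\<lambda>I. card (CD I)) ` {J. J \<subseteq> H \<and> card J = card I})"
    using assms(1) by (simp add: finite_subset[of _ "Pow H"] subset_iff)
  show ?thesis unfolding local_growth_def
    by (rule Max_ge[OF fin]) (use assms in auto)
qed

theorem mainTheorem3: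
  fixes H :: "'a set" and CD :: "'a set \<Rightarrow> 'c set" and D :: "'c \<Rightarrow> 'a set"
    and n b \<rho> :: nat and \<alpha> \<beta> r \<phi> :: real
  assumes finH: "finite H" and neH: "H \<noteq> {}" and n_def: "card H = n"
    and finCD: "\<forall>I \<subseteq> H. finite (CD I)"
    and dim: "comb_dim H CD b"
    and Dchoice: "defining_choice H CD D"
    and comp: "complies H CD D"
    and growth: "\<forall>m \<le> n. real (local_growth H CD m) \<le> 2 powr \<alpha> * real m powr \<beta>"
    and beta: "\<beta> \<ge> 1"
    and r: "r > 1"
    and phi: "0 < \<phi>" "\<phi> < 1"
    and rho: "real \<rho> \<ge> max (4 * r * (real b * ln 3 + (\<alpha> - \<beta>) * ln 2 + ln (1 / \<phi>)))
                             (8 * r * \<beta> * ln (4 * r * \<beta>))"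
  shows "measure_pmf.prob (draws H \<rho>)
           {\<omega>. \<forall>\<sigma> \<in> CD (sample_set \<rho> \<omega>). real (card (conflict_list H CD D \<sigma>)) \<le> real n / r}
         \<ge> 1 - \<phi>"
proof -
  define U where "U = {..<\<rho>}"
  define P where "P = draws H \<rho>"
  define K where "K = conflict_list H CD D"
  define bad where "bad \<sigma> \<longleftrightarrow> real (card (K \<sigma>)) > real n / r" for \<sigma>
  define G where "G S \<omega> = {\<sigma> \<in> CD (\<omega> ` S). bad \<sigma>}" for S and \<omega> :: "nat \<Rightarrow> 'a"
  define E where "E S = {\<omega>. \<exists>\<sigma>\<in>G S \<omega>. \<forall>i\<in>U - S. \<omega> i \<notin> K \<sigma>}" for S
  define Bad where "Bad = {\<omega>. \<exists>\<sigma>\<in>CD (\<omega> ` U). bad \<sigma>}"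
  define M where "M = 2 powr \<alpha> * real \<rho> powr \<beta>"
  define q where "q = 1 - 1 / r"
  define x :: real where "x = 1 / 3"
  have finU: "finite U" by (simp add: U_def)
  have cardU: "card U = \<rho>" by (simp add: U_def)
  have PU: "P = Pi_pmf U undefined (\<lambda>_. pmf_of_set H)" by (simp add: P_def U_def draws_def)
  have Mnn: "M \<ge> 0" by (simp add: M_def)
  have qnn: "q \<ge> 0" using r by (simp add: q_def)
  have KH: "K \<sigma> \<subseteq> H" for \<sigma> by (auto simp: K_def conflict_list_def)
  have stA: "measure_pmf.prob P (E S) \<le> M * q ^ card (U - S)" if SU: "S \<subseteq> U" for S
    unfolding PU E_def
  proof (rule stepA[OF finU SU finH neH _ _ _ qnn Mnn])
    fix f g :: "nat \<Rightarrow> 'a" assume "\<forall>i\<in>S. f i = g i"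
    then have "f ` S = g ` S" by (auto simp: image_def)
    then show "G S f = G S g" by (simp add: G_def)
  next
    fix f :: "nat \<Rightarrow> 'a" assume fH: "\<forall>i\<in>S. f i \<in> H"
    then have sub: "f ` S \<subseteq> H" by auto
    have finC: "finite (CD (f ` S))" using finCD sub by blast
    have "card (G S f) \<le> card (CD (f ` S))"
      unfolding G_def by (rule card_mono[OF finC]) auto
    also have "\<dots> \<le> local_growth H CD (card (f ` S))" by (rule card_CD_le_growth[OF finH sub])
    finally have c1: "real (card (G S f)) \<le> real (local_growth H CD (card (f ` S)))" by simp
    have "card (f ` S) \<le> n" using card_mono[OF finH sub] n_def by simp
    then have c2: "real (local_growth H CD (card (f ` S))) \<le> 2 powr \<alpha> * real (card (f ` S)) powr \<beta>"
      using growth by blast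
    have "card (f ` S) \<le> card S" using finU SU by (meson card_image_le finite_subset)
    also have "card S \<le> card U" using finU SU by (rule card_mono)
    finally have "real (card (f ` S)) \<le> real \<rho>" using cardU by simp
    then have c3: "real (card (f ` S)) powr \<beta> \<le> real \<rho> powr \<beta>"
      using beta by (intro powr_mono2) auto
    have c4: "2 powr \<alpha> * real (card (f ` S)) powr \<beta> \<le> 2 powr \<alpha> * real \<rho> powr \<beta>"
      by (rule mult_left_mono[OF c3]) simp
    have "real (card (G S f)) \<le> M"
      unfolding M_def using c1 c2 c4 by linarith
    moreover have "finite (G S f)" using finC by (simp add: G_def)
    ultimately show "finite (G S f) \<and> real (card (G S f)) \<le> M" by simp
  next
    fix f :: "nat \<Rightarrow> 'a" and \<sigma> assume "\<forall>i\<in>S. f i \<in> H" "\<sigma> \<in> G S f"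
    then have bs: "bad \<sigma>" by (simp add: G_def)
    have fK: "finite (K \<sigma>)" using KH finH finite_subset by blast
    have ck: "card (K \<sigma>) \<le> n" using card_mono[OF finH KH] n_def by simp
    have "card (H - K \<sigma>) = n - card (K \<sigma>)" using card_Diff_subset[OF fK KH] n_def by simp
    then have "real (card (H - K \<sigma>)) = real n - real (card (K \<sigma>))" using ck by simp
    also have "\<dots> \<le> real n - real n / r" using bs by (simp add: bad_def)
    also have "\<dots> = q * real n" by (simp add: q_def algebra_simps)
    finally show "real (card (H - K \<sigma>)) \<le> q * real (card H)" using n_def by simp
  qed
  have comp1: "\<And>R \<sigma>. R \<subseteq> H \<Longrightarrow> \<sigma> \<in> CD R \<Longrightarrow>
      (\<exists>J. is_defining_set H CD \<sigma> J \<and> J \<subseteq> R) \<and> K \<sigma> \<inter> R = {}"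
    using comp unfolding complies_def K_def by blast
  have comp2: "\<And>R \<sigma> J. R \<subseteq> H \<Longrightarrow> \<sigma> \<in> all_cells H CD \<Longrightarrow>
      is_defining_set H CD \<sigma> J \<Longrightarrow> J \<subseteq> R \<Longrightarrow> K \<sigma> \<inter> R = {} \<Longrightarrow> \<sigma> \<in> CD R"
    using comp unfolding complies_def K_def by blast
  have dim1: "\<And>I \<sigma>. I \<subseteq> H \<Longrightarrow> \<sigma> \<in> CD I \<Longrightarrow> \<exists>J\<subseteq>I. card J \<le> b \<and> \<sigma> \<in> CD J"
    using dim unfolding comb_dim_def has_dim_bound_def by blast
  have finP: "finite (set_pmf P)"
  proof -
    have "set_pmf P \<subseteq> PiE_dflt U undefined (set_pmf \<circ> (\<lambda>_. pmf_of_set H))"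
      unfolding PU by (rule set_Pi_pmf_subset'[OF finU])
    moreover have "finite (PiE_dflt U undefined (set_pmf \<circ> (\<lambda>_. pmf_of_set H)))"
      using finU finH neH by (intro finite_PiE_dflt) auto
    ultimately show ?thesis by (rule finite_subset)
  qed
  have stB: "x ^ b * measure_pmf.prob P Bad
         \<le> (\<Sum>S\<in>Pow U. x ^ card S * (1 - x) ^ card (U - S) * measure_pmf.prob P (E S))"
  proof (rule stepB[OF finP finU])
    show "0 \<le> x" "x \<le> 1" by (auto simp: x_def)
  next
    fix \<omega> assume om: "\<omega> \<in> set_pmf P" and ob: "\<omega> \<in> Bad"
    have "\<omega> \<in> PiE_dflt U undefined (set_pmf \<circ> (\<lambda>_. pmf_of_set H))"
      using om set_Pi_pmf_subset'[OF finU, of undefined "\<lambda>_. pmf_of_set H"] unfolding PU by blast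
    then have omH: "\<forall>i\<in>U. \<omega> i \<in> H" using finH neH by (auto simp: PiE_dflt_def)
    define R where "R = \<omega> ` U"
    have RH: "R \<subseteq> H" using omH by (auto simp: R_def)
    obtain \<sigma> where sR: "\<sigma> \<in> CD R" and bs: "bad \<sigma>" using ob by (auto simp: Bad_def R_def)
    obtain J where J: "is_defining_set H CD \<sigma> J" "J \<subseteq> R" and KR: "K \<sigma> \<inter> R = {}"
      using comp1[OF RH sR] by blast
    obtain J' where J': "J' \<subseteq> R" "card J' \<le> b" "\<sigma> \<in> CD J'"
      using dim1[OF RH sR] by blast
    have cJ: "card J \<le> b"
    proof -
      have "card J \<le> card J'" using J(1) J'(1,3) RH unfolding is_defining_set_def by blast
      then show ?thesis using J'(2) by linarith
    qed
    have finJ: "finite J" by (rule finite_subset[OF order.trans[OF J(2) RH] finH])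
    define T where "T = (\<lambda>j. SOME i. i \<in> U \<and> \<omega> i = j) ` J"
    have pick: "(SOME i. i \<in> U \<and> \<omega> i = j) \<in> U \<and> \<omega> (SOME i. i \<in> U \<and> \<omega> i = j) = j" if jJ: "j \<in> J" for j
    proof -
      have ex: "\<exists>i. i \<in> U \<and> \<omega> i = j" using jJ J(2) by (auto simp: R_def)
      show ?thesis using someI_ex[OF ex] .
    qed
    have TU: "T \<subseteq> U" using pick by (auto simp: T_def)
    have JT: "J \<subseteq> \<omega> ` T"
    proof
      fix j
      assume jJ: "j \<in> J"
      show "j \<in> \<omega> ` T"
      proof (rule image_eqI)
        show "j = \<omega> (SOME i. i \<in> U \<and> \<omega> i = j)" using pick[OF jJ] by simp
        show "(SOME i. i \<in> U \<and> \<omega> i = j) \<in> T" unfolding T_def using jJ by (rule imageI)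
      qed
    qed
    have cT: "card T \<le> b"
    proof -
      have "card T \<le> card J" unfolding T_def by (rule card_image_le[OF finJ])
      then show ?thesis using cJ by linarith
    qed
    have sall: "\<sigma> \<in> all_cells H CD" using sR RH by (auto simp: all_cells_def)
    have "\<forall>S. T \<subseteq> S \<and> S \<subseteq> U \<longrightarrow> \<omega> \<in> E S"
    proof (intro allI impI)
      fix S assume S: "T \<subseteq> S \<and> S \<subseteq> U"
      have RS: "\<omega> ` S \<subseteq> H" using S omH by auto
      have "\<omega> ` S \<subseteq> R" using S by (auto simp: R_def)
      then have kS: "K \<sigma> \<inter> \<omega> ` S = {}" using KR by blast
      have jS: "J \<subseteq> \<omega> ` S" using JT S by blast
      have "\<sigma> \<in> CD (\<omega> ` S)"
        by (rule comp2[OF RS sall J(1) jS kS])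
      then have "\<sigma> \<in> G S \<omega>" using bs by (simp add: G_def)
      moreover have "\<forall>i\<in>U - S. \<omega> i \<notin> K \<sigma>" using KR by (auto simp: R_def)
      ultimately show "\<omega> \<in> E S" by (auto simp: E_def)
    qed
    then show "\<exists>T\<subseteq>U. card T \<le> b \<and> (\<forall>S. T \<subseteq> S \<and> S \<subseteq> U \<longrightarrow> \<omega> \<in> E S)"
      using TU cT by blast
  qed
  have "(\<Sum>S\<in>Pow U. x ^ card S * (1 - x) ^ card (U - S) * measure_pmf.prob P (E S))
      \<le> (\<Sum>S\<in>Pow U. x ^ card S * (1 - x) ^ card (U - S) * (M * q ^ card (U - S)))"
    proof (rule sum_mono, rule mult_left_mono)
    fix S assume "S \<in> Pow U"
    then show "measure_pmf.prob P (E S) \<le> M * q ^ card (U - S)" by (intro stA) auto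
  qed (simp add: x_def)
  also have "\<dots> = M * (\<Sum>S\<in>Pow U. x ^ card S * ((1 - x) * q) ^ card (U - S))"
    unfolding sum_distrib_left
  proof (rule sum.cong[OF refl])
    fix S
    show "x ^ card S * (1 - x) ^ card (U - S) * (M * q ^ card (U - S)) = M * (x ^ card S * ((1 - x) * q) ^ card (U - S))"
      by (simp add: power_mult_distrib mult_ac)
  qed
  also have "\<dots> = M * (x + (1 - x) * q) ^ \<rho>"
    by (simp add: sum_pow_subsets finU cardU)
  also have "x + (1 - x) * q = 1 - 2 / (3 * r)"
    using r by (simp add: x_def q_def field_simps)
  finally have "x ^ b * measure_pmf.prob P Bad \<le> M * (1 - 2 / (3 * r)) ^ \<rho>"
    using stB by linarith
  then have "3 ^ b * (x ^ b * measure_pmf.prob P Bad) \<le> 3 ^ b * (M * (1 - 2 / (3 * r)) ^ \<rho>)"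
    by simp
  moreover have "3 ^ b * (x ^ b * measure_pmf.prob P Bad) = measure_pmf.prob P Bad"
  proof -
    have "(3::real) ^ b * x ^ b = 1" by (simp add: x_def power_one_over)
    then show ?thesis by (metis mult.assoc mult_1)
  qed
  moreover have "3 ^ b * (M * (1 - 2 / (3 * r)) ^ \<rho>) \<le> \<phi>"
    using final_arith[OF beta r phi(1) rho] by (simp add: M_def mult.assoc)
  ultimately have pBad: "measure_pmf.prob P Bad \<le> \<phi>" by linarith
  have eq: "{\<omega>. \<forall>\<sigma> \<in> CD (sample_set \<rho> \<omega>). real (card (conflict_list H CD D \<sigma>)) \<le> real n / r}
      = space (measure_pmf P) - Bad"
    by (auto simp: Bad_def bad_def K_def sample_set_def U_def not_less)
  show ?thesis
    unfolding P_def[symmetric] eq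
    using measure_pmf.prob_compl[of Bad P] pBad by simp
qed

end
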